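(* Let $\mathcal{A}$ be a separating union-closed family with base set $[n]$ and height $h=4$, and suppose $|\mathcal{B}(\mathcal{A})|=4$. Then $|B|=n$, where $B=b(\mathcal{A}_{<n/2})$.
   Context: A family of sets $\mathcal{A}$ is union-closed if it is a finite family of distinct finite sets with at least one nonempty member set, and $X,Y\in\mathcal{A}$ implies $X\cup Y\in\mathcal{A}$ (the empty set may be a member). For a family $\mathcal{F}$, $b(\mathcal{F})=\bigcup_{F\in\mathcal{F}}F$; the base set $b(\mathcal{A})$ is denoted $[n]=\{1,\dots,n\}$. $\mathcal{A}$ is separating if for any two distinct $x,y\in[n]$ there is $A\in\mathcal{A}$ containing exactly one of $x,y$. A chain in $\mathcal{A}$ is a subfamily any two distinct members of which are comparable under proper inclusion; the height $h$ of $\mathcal{A}$ is the maximum size of a chain in $\mathcal{A}$. For real $x\ge 0$, $\mathcal{A}_{<x}=\{A\in\mathcal{A} : |A|<x\}$. For $\mathcal{S}\subseteq\mathcal{A}$ and $S\in\mathcal{S}$, $\mathrm{irr}_{\mathcal{S}}(S)=\{s\in S : s\notin b(\mathcal{S}\setminus\{S\})\}$, and $\mathcal{S}$ is irredundant if $\mathrm{irr}_{\mathcal{S}}(S)\neq\emptyset$ for every $S\in\mathcal{S}$. With $B=b(\mathcal{A}_{<n/2})$, $\mathcal{B}(\mathcal{A})$ denotes any irredundant subfamily of $\mathcal{A}_{<n/2}$ of minimum size such that $b(\mathcal{B}(\mathcal{A}))=B$. *)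

theory Defs
  imports Main Complex_Main
begin

definition union_closed :: "'a set set \<Rightarrow> bool" where
  "union_closed A \<longleftrightarrow> finite A \<and> (\<forall>X\<in>A. finite X) \<and> (\<exists>X\<in>A. X \<noteq> {}) \<and>
     (\<forall>X\<in>A. \<forall>Y\<in>A. X \<union> Y \<in> A)"

definition separating :: "'a set set \<Rightarrow> bool" where
  "separating A \<longleftrightarrow> (\<forall>x\<in>\<Union>A. \<forall>y\<in>\<Union>A. x \<noteq> y \<longrightarrow>
     (\<exists>X\<in>A. (x \<in> X \<and> y \<notin> X) \<or> (y \<in> X \<and> x \<notin> X)))"

definition is_chain :: "'a set set \<Rightarrow> bool" where
  "is_chain C \<longleftrightarrow> (\<forall>X\<in>C. \<forall>Y\<in>C. X \<noteq> Y \<longrightarrow> X \<subset> Y \<or> Y \<subset> X)"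

definition height :: "'a set set \<Rightarrow> nat" where
  "height A = Max (card ` {C. C \<subseteq> A \<and> is_chain C})"

definition below :: "'a set set \<Rightarrow> real \<Rightarrow> 'a set set" where
  "below A x = {X \<in> A. real (card X) < x}"

definition irr :: "'a set set \<Rightarrow> 'a set \<Rightarrow> 'a set" where
  "irr S X = {s \<in> X. s \<notin> \<Union>(S - {X})}"

definition irredundant :: "'a set set \<Rightarrow> bool" where
  "irredundant S \<longleftrightarrow> (\<forall>X\<in>S. irr S X \<noteq> {})"

text \<open>S is a valid choice of the family calB(A): an irredundant subfamily of A_{<n/2}
  of minimum size whose union is B = b(A_{<n/2}).\<close>
definition is_calB :: "'a set set \<Rightarrow> nat \<Rightarrow> 'a set set \<Rightarrow> bool" where
  "is_calB A n S \<longleftrightarrow>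
     (let L = below A (real n / 2) in
      S \<subseteq> L \<and> irredundant S \<and> \<Union>S = \<Union>L \<and>
      (\<forall>T. T \<subseteq> L \<and> irredundant T \<and> \<Union>T = \<Union>L \<longrightarrow> card S \<le> card T))"

end

theory Submission
  imports Defs
begin

lemma chain_ins:
  assumes "is_chain C" "finite C" "\<forall>Y\<in>C. X \<subset> Y"
  shows "is_chain (insert X C) \<and> card (insert X C) = Suc (card C)"
proof
  show "is_chain (insert X C)" using assms(1,3) unfolding is_chain_def by blast
  have "X \<notin> C" using assms(3) by blast
  thus "card (insert X C) = Suc (card C)" using assms(2) by simp
qed

lemma chain5:
  assumes "X1 \<subset> X2" "X2 \<subset> X3" "X3 \<subset> X4" "X4 \<subset> X5"
  shows "is_chain {X1,X2,X3,X4,X5} \<and> card {X1,X2,X3,X4,X5} = 5"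
proof -
  have t: "X1 \<subset> X3" "X1 \<subset> X4" "X1 \<subset> X5" "X2 \<subset> X4" "X2 \<subset> X5" "X3 \<subset> X5"
    using assms by (meson psubset_trans)+
  have h5: "is_chain {X5} \<and> card {X5} = 1" unfolding is_chain_def by simp
  have h4: "is_chain {X4,X5} \<and> card {X4,X5} = 2"
    using chain_ins[of "{X5}" X4] h5 assms t by simp
  have h3: "is_chain {X3,X4,X5} \<and> card {X3,X4,X5} = 3"
    using chain_ins[of "{X4,X5}" X3] h4 assms t by simp
  have h2: "is_chain {X2,X3,X4,X5} \<and> card {X2,X3,X4,X5} = 4"
    using chain_ins[of "{X3,X4,X5}" X2] h3 assms t by simp
  show ?thesis
    using chain_ins[of "{X2,X3,X4,X5}" X1] h2 assms t by simp
qed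

lemma union_sub_in:
  assumes uc: "\<forall>X\<in>A. \<forall>Y\<in>A. X \<union> Y \<in> A"
  shows "finite F \<Longrightarrow> F \<noteq> {} \<Longrightarrow> F \<subseteq> A \<Longrightarrow> \<Union>F \<in> A"
proof (induction F rule: finite_ne_induct)
  case (singleton x) then show ?case by simp
next
  case (insert x F)
  then show ?case using uc by simp
qed

theorem propositionJ:
  fixes A :: "nat set set" and n :: nat and S :: "nat set set"
  assumes "union_closed A"
    and "\<Union>A = {1..n}"
    and "separating A"
    and "height A = 4"
    and "is_calB A n S"
    and "card S = 4"
  shows "card (\<Union>(below A (real n / 2))) = n"
proof (rule ccontr)
  assume ne: "card (\<Union>(below A (real n / 2))) \<noteq> n"
  define L where "L = below A (real n / 2)"
  have LA: "L \<subseteq> A" unfolding L_def below_def by auto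
  have fin: "finite A" and ne0: "\<exists>X\<in>A. X \<noteq> {}" and uc: "\<forall>X\<in>A. \<forall>Y\<in>A. X \<union> Y \<in> A"
    using assms(1) unfolding union_closed_def by auto
  have SL: "S \<subseteq> L" and irrS: "irredundant S" and US: "\<Union>S = \<Union>L"
    using assms(5) unfolding is_calB_def L_def Let_def by auto
  have UL: "\<Union>L \<subset> {1..n}"
  proof -
    have "\<Union>L \<subseteq> {1..n}" using LA assms(2) by blast
    moreover have "\<Union>L \<noteq> {1..n}" using ne L_def by auto
    ultimately show ?thesis by blast
  qed
  have "\<Union>A \<in> A" using union_sub_in[OF uc, of A] fin ne0 by blast
  hence topA: "{1..n} \<in> A" using assms(2) by simp
  obtain a F where F: "S = insert a F" "a \<notin> F" "card F = 3"
    using assms(6) card_Suc_eq[of S 3] by auto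
  obtain b c d where bcd: "F = {b,c,d}" "b \<noteq> c" "c \<noteq> d" "b \<noteq> d"
    using F(3) unfolding card_3_iff by auto
  have S4: "S = {a,b,c,d}" using F bcd by auto
  have dist: "a \<noteq> b" "a \<noteq> c" "a \<noteq> d" using F bcd by auto
  have inA: "a \<in> A" "b \<in> A" "c \<in> A" "d \<in> A" using S4 SL LA by auto
  have "irr S b \<noteq> {}" using irrS S4 unfolding irredundant_def by simp
  then obtain x where "x \<in> irr S b" by blast
  hence x: "x \<in> b" "x \<notin> \<Union>(S - {b})" unfolding irr_def by auto
  have "irr S c \<noteq> {}" using irrS S4 unfolding irredundant_def by simp
  then obtain y where "y \<in> irr S c" by blast
  hence y: "y \<in> c" "y \<notin> \<Union>(S - {c})" unfolding irr_def by auto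
  have "irr S d \<noteq> {}" using irrS S4 unfolding irredundant_def by simp
  then obtain z where "z \<in> irr S d" by blast
  hence z: "z \<in> d" "z \<notin> \<Union>(S - {d})" unfolding irr_def by auto
  have "a \<in> S - {b}" using S4 dist by simp
  hence x': "x \<notin> a" using x by blast
  have "a \<in> S - {c}" "b \<in> S - {c}" using S4 dist bcd by auto
  hence y': "y \<notin> a \<union> b" using y by blast
  have "a \<in> S - {d}" "b \<in> S - {d}" "c \<in> S - {d}" using S4 dist bcd by auto
  hence z': "z \<notin> a \<union> b \<union> c" using z by blast
  have c1: "a \<subset> a \<union> b" using x x' by blast
  have c2: "a \<union> b \<subset> a \<union> b \<union> c" using y y' by blast
  have c3: "a \<union> b \<union> c \<subset> a \<union> b \<union> c \<union> d" using z z' by blast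
  have "\<Union>S = a \<union> b \<union> c \<union> d" using S4 by auto
  hence c4: "a \<union> b \<union> c \<union> d \<subset> {1..n}" using UL US by simp
  define C where "C = {a, a \<union> b, a \<union> b \<union> c, a \<union> b \<union> c \<union> d, {1..n}}"
  have Cc: "is_chain C \<and> card C = 5" unfolding C_def using chain5[OF c1 c2 c3 c4] .
  have "a \<union> b \<in> A" using inA uc by blast
  moreover have "a \<union> b \<union> c \<in> A" using calculation inA uc by blast
  moreover have "a \<union> b \<union> c \<union> d \<in> A" using calculation inA uc by blast
  ultimately have CA: "C \<subseteq> A" unfolding C_def using inA topA by simp
  have "finite {C. C \<subseteq> A \<and> is_chain C}" using fin by simp
  hence fi: "finite (card ` {C. C \<subseteq> A \<and> is_chain C})" by simp
  have "card C \<in> card ` {C. C \<subseteq> A \<and> is_chain C}" using Cc CA by blast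
  hence "card C \<le> height A" unfolding height_def using fi by (rule Max_ge[rotated])
  thus False using Cc assms(4) by simp
qed

end
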